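(* Let $X_1, X_2, \ldots$ be independent random variables, each exponentially distributed with rate $\lambda>0$, fix $r>0$, and let $S_n=\sum_{k=1}^n X_k$. Let $n\ge 1$ be an integer, $j\in\{0,1,2,\ldots\}$, and $t$ with $jr\le t<(j+1)r$. Then \[ \Pr\Big(S_n\le t,\ \bigcap_{k=1}^n \{X_k\le r\}\Big)=e^{-\lambda t}\sum_{i=0}^{j}(-1)^i\binom{n}{i}\sum_{k=n}^{\infty}\frac{(\lambda(t-ir))^k}{k!}. \]
   Context: Here $\binom{n}{i}=0$ when $i>n$. The exponential distribution with rate $\lambda$ has density $\lambda e^{-\lambda x}$ for $x>0$ and $0$ otherwise. *)

theory Defs
  imports "HOL-Probability.Probability"
begin

end

theory Submission
  imports Defs
begin


definition tp :: "nat \<Rightarrow> real \<Rightarrow> real" where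
  "tp m s = (if s < 0 then 0 else s ^ m)"

lemma tp_Suc_max: "tp (Suc m) s = (max s 0) ^ Suc m"
  by (simp add: tp_def max_def)

lemma tp_nonneg: "0 \<le> tp m s"
  by (simp add: tp_def)

lemma tp_deriv:
  assumes "s \<noteq> 0"
  shows "((tp (Suc m)) has_real_derivative (real (Suc m) * tp m s)) (at s)"
proof (cases "s < 0")
  case True
  have "((\<lambda>_. 0::real) has_real_derivative (real (Suc m) * tp m s)) (at s)"
    using True by (auto intro!: derivative_eq_intros simp: tp_def)
  then show ?thesis
    apply (rule has_field_derivative_transform_within_open[where S="{..<0}"])
    using True by (auto simp: tp_def)
next
  case False
  with assms have s: "s > 0" by auto
  have "((\<lambda>x. x ^ Suc m) has_real_derivative (real (Suc m) * tp m s)) (at s)"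
    using s DERIV_pow[of "Suc m" s UNIV] by (simp add: tp_def)
  then show ?thesis
    apply (rule has_field_derivative_transform_within_open[where S="{0<..}"])
    using s by (auto simp: tp_def)
qed

lemma tp_cont: "continuous_on A (tp (Suc m))"
  unfolding tp_Suc_max[abs_def] by (intro continuous_intros)

lemma tp_integral:
  assumes "0 \<le> r"
  shows "((\<lambda>y. tp m (a - y)) has_integral
           ((tp (Suc m) a - tp (Suc m) (a - r)) / real (Suc m))) {0..r}"
proof -
  let ?G = "\<lambda>y. - tp (Suc m) (a - y) / real (Suc m)"
  have "((\<lambda>y. tp m (a - y)) has_integral (?G r - ?G 0)) {0..r}"
  proof (rule fundamental_theorem_of_calculus_strong[where S="{a}"])
    show "continuous_on {0..r} ?G"
      by (intro continuous_intros continuous_on_compose2[OF tp_cont]) auto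
    fix y assume y: "y \<in> {0..r} - {a}"
    have d: "((tp (Suc m)) has_real_derivative (real (Suc m) * tp m (a - y))) (at (a - y))"
      using y by (intro tp_deriv) auto
    have d2: "((\<lambda>y. tp (Suc m) (a - y)) has_real_derivative (real (Suc m) * tp m (a - y) * (-1))) (at y)"
    proof -
      have g: "((\<lambda>y. a - y) has_real_derivative -1) (at y)"
        by (auto intro!: derivative_eq_intros)
      show ?thesis using DERIV_chain2[where g="\<lambda>y. a - y", OF _ g, of "tp (Suc m)"] d by simp
    qed
    have "(?G has_real_derivative (- (real (Suc m) * tp m (a - y) * (-1)) / real (Suc m))) (at y)"
      using d2 by (auto intro!: derivative_eq_intros)
    then show "(?G has_vector_derivative tp m (a - y)) (at y)"
      by (simp add: has_real_derivative_iff_has_vector_derivative[symmetric] del: of_nat_Suc)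
  qed (use assms in auto)
  moreover have "?G r - ?G 0 = (tp (Suc m) a - tp (Suc m) (a - r)) / real (Suc m)"
    by (simp only: diff_divide_distrib) simp
  ultimately show ?thesis by simp
qed



lemma pascal_sum:
  fixes a :: "nat \<Rightarrow> real"
  shows "(\<Sum>i\<le>n. (-1)^i * real (n choose i) * (a i - a (Suc i))) =
         (\<Sum>i\<le>Suc n. (-1)^i * real (Suc n choose i) * a i)"
proof -
  let ?g = "\<lambda>i. (-1)^i * real (n choose i) * a i"
  have g1: "(\<Sum>i\<le>n. ?g i) = ?g 0 + (\<Sum>i\<le>n. ?g (Suc i))"
  proof -
    have "(\<Sum>i\<le>n. ?g i) = (\<Sum>i\<le>Suc n. ?g i)" by simp
    also have "\<dots> = ?g 0 + (\<Sum>i\<le>n. ?g (Suc i))" by (rule sum.atMost_Suc_shift)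
    finally show ?thesis .
  qed
  have "(\<Sum>i\<le>n. (-1)^i * real (n choose i) * (a i - a (Suc i)))
      = (\<Sum>i\<le>n. ?g i) - (\<Sum>i\<le>n. (-1)^i * real (n choose i) * a (Suc i))"
    by (simp add: sum_subtractf right_diff_distrib)
  also have "\<dots> = a 0 + (\<Sum>i\<le>n. (-1)^(Suc i) * real (Suc n choose Suc i) * a (Suc i))"
    unfolding g1 by (simp add: sum_subtractf[symmetric] sum.distrib[symmetric] algebra_simps)
  also have "\<dots> = (\<Sum>i\<le>Suc n. (-1)^i * real (Suc n choose i) * a i)"
    by (subst sum.atMost_Suc_shift) simp
  finally show ?thesis .
qed

definition q :: "real \<Rightarrow> real \<Rightarrow> nat \<Rightarrow> real \<Rightarrow> real" where
  "q l r n z = l ^ n / fact (n - 1) * (\<Sum>i\<le>n. (-1)^i * real (n choose i) * tp (n - 1) (z - real i * r))"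

lemma q_rec:
  assumes "0 \<le> r" "n \<ge> 1"
  shows "((\<lambda>y. q l r n (z - y)) has_integral (q l r (Suc n) z / l)) {0..r}"
proof -
  obtain m where n: "n = Suc m" using assms by (cases n) auto
  define c where "c = l ^ Suc m / fact m"
  have "((\<lambda>y. c * (\<Sum>i\<le>Suc m. (-1)^i * real (Suc m choose i) * tp m (z - real i * r - y)))
     has_integral c * (\<Sum>i\<le>Suc m. (-1)^i * real (Suc m choose i) *
        ((tp (Suc m) (z - real i * r) - tp (Suc m) (z - real i * r - r)) / real (Suc m)))) {0..r}"
    by (intro has_integral_mult_right has_integral_sum ballI finite_atMost tp_integral assms)
  moreover have "c * (\<Sum>i\<le>Suc m. (-1)^i * real (Suc m choose i) *
        ((tp (Suc m) (z - real i * r) - tp (Suc m) (z - real i * r - r)) / real (Suc m)))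
      = q l r (Suc n) z / l"
  proof -
    have "(\<Sum>i\<le>Suc m. (-1)^i * real (Suc m choose i) *
        ((tp (Suc m) (z - real i * r) - tp (Suc m) (z - real i * r - r)) / real (Suc m)))
      = (\<Sum>i\<le>Suc m. (-1)^i * real (Suc m choose i) *
        (tp (Suc m) (z - real i * r) - tp (Suc m) (z - real (Suc i) * r))) / real (Suc m)"
      unfolding sum_divide_distrib by (intro sum.cong refl) (simp add: algebra_simps)
    also have "\<dots> = (\<Sum>i\<le>Suc (Suc m). (-1)^i * real (Suc (Suc m) choose i) *
        tp (Suc m) (z - real i * r)) / real (Suc m)"
      by (subst pascal_sum[where a="\<lambda>i. tp (Suc m) (z - real i * r)"]) simp
    finally have X: "(\<Sum>i\<le>Suc m. (-1)^i * real (Suc m choose i) *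
        ((tp (Suc m) (z - real i * r) - tp (Suc m) (z - real i * r - r)) / real (Suc m))) = \<dots>" .
    define S where "S = (\<Sum>i\<le>Suc (Suc m). (-1)^i * real (Suc (Suc m) choose i) *
        tp (Suc m) (z - real i * r))"
    have "q l r (Suc n) z = l ^ Suc (Suc m) / fact (Suc m) * S"
      unfolding q_def S_def n by simp
    moreover have "c * (S / real (Suc m)) = (l ^ Suc (Suc m) / fact (Suc m) * S) / l"
      unfolding c_def by (cases "l = 0") (simp_all add: field_simps del: of_nat_Suc)
    ultimately show ?thesis unfolding X S_def by simp
  qed
  moreover have "(\<lambda>y. q l r n (z - y)) = (\<lambda>y. c * (\<Sum>i\<le>Suc m. (-1)^i * real (Suc m choose i) * tp m (z - real i * r - y)))"
    unfolding q_def c_def n by (simp add: algebra_simps)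
  ultimately show ?thesis by simp
qed



lemma q_nonneg:
  assumes "0 \<le> l" "0 < r" "n \<ge> 1"
  shows "0 \<le> q l r n z"
  using assms(3)
proof (induction n arbitrary: z rule: dec_induct)
  case base
  show ?case using assms by (simp add: q_def tp_def atMost_Suc)
next
  case (step n)
  have "0 \<le> q l r (Suc n) z / l"
    using has_integral_nonneg[OF q_rec[OF _ step(1), of r l z]] step(3) assms by simp
  show ?case
  proof (cases "l = 0")
    case True then show ?thesis by (simp add: q_def)
  next
    case False
    then have "q l r (Suc n) z = l * (q l r (Suc n) z / l)" by simp
    with \<open>0 \<le> q l r (Suc n) z / l\<close> assms show ?thesis by (metis mult_nonneg_nonneg)
  qed
qed

definition EE :: "real \<Rightarrow> real measure" where
  "EE l = density lborel (exponential_density l)"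

definition AA :: "real \<Rightarrow> real \<Rightarrow> nat \<Rightarrow> real \<Rightarrow> (nat \<Rightarrow> real) set" where
  "AA l r n t = {x \<in> space (PiM {1..n} (\<lambda>_. EE l)). (\<Sum>k=1..n. x k) \<le> t \<and> (\<forall>k\<in>{1..n}. x k \<le> r)}"

lemma sets_EE[measurable_cong, simp]: "sets (EE l) = sets borel"
  by (simp add: EE_def)

lemma AA_sets[measurable]: "AA l r n t \<in> sets (PiM {1..n} (\<lambda>_. EE l))"
  unfolding AA_def by measurable

lemma AA_step:
  assumes "0 < l"
  shows "emeasure (PiM {1..Suc n} (\<lambda>_. EE l)) (AA l r (Suc n) t) =
    (\<integral>\<^sup>+ y. indicator {..r} y * emeasure (PiM {1..n} (\<lambda>_. EE l)) (AA l r n (t - y)) \<partial>EE l)"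
proof -
  interpret E: prob_space "EE l" unfolding EE_def using prob_space_exponential_density[OF assms] .
  interpret P: product_sigma_finite "\<lambda>_. EE l" by standard
  have ins: "{1..Suc n} = insert (Suc n) {1..n}" by auto
  have "emeasure (PiM {1..Suc n} (\<lambda>_. EE l)) (AA l r (Suc n) t) =
      (\<integral>\<^sup>+ x. indicator (AA l r (Suc n) t) x \<partial>PiM (insert (Suc n) {1..n}) (\<lambda>_. EE l))"
    unfolding ins[symmetric] by (rule nn_integral_indicator[symmetric]) (rule AA_sets)
  also have "\<dots> = (\<integral>\<^sup>+ y. (\<integral>\<^sup>+ x. indicator (AA l r (Suc n) t) (x(Suc n := y))
      \<partial>PiM {1..n} (\<lambda>_. EE l)) \<partial>EE l)"
  proof -
    have "AA l r (Suc n) t \<in> sets (PiM (insert (Suc n) {1..n}) (\<lambda>_. EE l))"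
      using AA_sets[of l r "Suc n" t] ins by metis
    then have m: "indicator (AA l r (Suc n) t) \<in> borel_measurable (PiM (insert (Suc n) {1..n}) (\<lambda>_. EE l))"
      by (rule borel_measurable_indicator)
    show ?thesis
      by (rule P.product_nn_integral_insert_rev[OF _ _ m]) auto
  qed
  also have "\<dots> = (\<integral>\<^sup>+ y. (\<integral>\<^sup>+ x. indicator {..r} y * indicator (AA l r n (t - y)) x
      \<partial>PiM {1..n} (\<lambda>_. EE l)) \<partial>EE l)"
  proof (intro nn_integral_cong)
    fix y x assume x: "x \<in> space (PiM {1..n} (\<lambda>_. EE l))"
    have sp: "x(Suc n := y) \<in> space (PiM {1..Suc n} (\<lambda>_. EE l))"
      using x unfolding ins by (auto simp: space_PiM PiE_def extensional_def EE_def)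
    have sum: "(\<Sum>k=1..Suc n. (x(Suc n := y)) k) = (\<Sum>k=1..n. x k) + y"
    proof -
      have "(\<Sum>k=1..n. (x(Suc n := y)) k) = (\<Sum>k=1..n. x k)"
        by (rule sum.cong) auto
      then show ?thesis by (simp add: sum.cl_ivl_Suc)
    qed
    have all: "(\<forall>k\<in>{1..Suc n}. (x(Suc n := y)) k \<le> r) \<longleftrightarrow> (\<forall>k\<in>{1..n}. x k \<le> r) \<and> y \<le> r"
      unfolding ins by auto
    have "x(Suc n := y) \<in> AA l r (Suc n) t \<longleftrightarrow> y \<le> r \<and> x \<in> AA l r n (t - y)"
    proof -
      have 1: "x(Suc n := y) \<in> AA l r (Suc n) t \<longleftrightarrow> (\<Sum>k=1..n. x k) + y \<le> t \<and> ((\<forall>k\<in>{1..n}. x k \<le> r) \<and> y \<le> r)"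
        unfolding AA_def using sp by (simp only: mem_Collect_eq sum all simp_thms)
      have 2: "x \<in> AA l r n (t - y) \<longleftrightarrow> (\<Sum>k=1..n. x k) \<le> t - y \<and> (\<forall>k\<in>{1..n}. x k \<le> r)"
        unfolding AA_def using x by (simp only: mem_Collect_eq simp_thms)
      show ?thesis unfolding 1 2 by auto
    qed
    then show "indicator (AA l r (Suc n) t) (x(Suc n := y)) = (indicator {..r} y * indicator (AA l r n (t - y)) x :: ennreal)"
      unfolding indicator_def by simp
  qed
  also have "\<dots> = (\<integral>\<^sup>+ y. indicator {..r} y * emeasure (PiM {1..n} (\<lambda>_. EE l)) (AA l r n (t - y)) \<partial>EE l)"
    by (intro nn_integral_cong nn_integral_cmult_indicator AA_sets)
  finally show ?thesis .
qed



definition h :: "real \<Rightarrow> real \<Rightarrow> nat \<Rightarrow> real \<Rightarrow> real" where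
  "h l r n z = exp (- l * z) * q l r n z"

lemma tp_measurable[measurable]: "tp m \<in> borel_measurable borel"
  unfolding tp_def[abs_def] by measurable

lemma q_measurable[measurable]: "q l r n \<in> borel_measurable borel"
  unfolding q_def[abs_def] by measurable

lemma h_measurable[measurable]: "h l r n \<in> borel_measurable borel"
  unfolding h_def[abs_def] by measurable

lemma h_nonneg: "0 \<le> l \<Longrightarrow> 0 < r \<Longrightarrow> n \<ge> 1 \<Longrightarrow> 0 \<le> h l r n z"
  unfolding h_def by (simp add: q_nonneg)

lemma h_point:
  assumes l: "0 < l" and r: "0 < r" and n: "n \<ge> 1"
  shows "(\<integral>\<^sup>+ y. ennreal (exponential_density l y) * indicator {..r} y * ennreal (h l r n (w - y)) \<partial>lborel)
      = ennreal (h l r (Suc n) w)"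
proof -
  have "(\<integral>\<^sup>+ y. ennreal (exponential_density l y) * indicator {..r} y * ennreal (h l r n (w - y)) \<partial>lborel)
     = (\<integral>\<^sup>+ y. ennreal (l * exp (- l * w) * q l r n (w - y)) * indicator {0..r} y \<partial>lborel)"
  proof (intro nn_integral_cong)
    fix y :: real
    show "ennreal (exponential_density l y) * indicator {..r} y * ennreal (h l r n (w - y))
        = ennreal (l * exp (- l * w) * q l r n (w - y)) * indicator {0..r} y"
    proof (cases "0 \<le> y \<and> y \<le> r")
      case True
      have "exp (- y * l) * exp (- l * (w - y)) = exp (- l * w)"
        by (simp add: exp_add[symmetric] algebra_simps)
      then have "exponential_density l y * h l r n (w - y) = l * exp (- l * w) * q l r n (w - y)"
        using True by (simp add: exponential_density_def h_def algebra_simps)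
      then show ?thesis using True l r n q_nonneg[of l r n "w - y"]
        by (simp add: ennreal_mult'[symmetric] indicator_def h_nonneg)
    next
      case False
      then show ?thesis by (auto simp: indicator_def exponential_density_def)
    qed
  qed
  also have "\<dots> = ennreal (l * exp (- l * w) * (q l r (Suc n) w / l))"
  proof (rule nn_integral_has_integral_lebesgue')
    show "((\<lambda>y. l * exp (- l * w) * q l r n (w - y)) has_integral (l * exp (- l * w) * (q l r (Suc n) w / l))) {0..r}"
      using has_integral_mult_right[OF q_rec[of r n l w], of "l * exp (- l * w)"] r n by simp
  qed (use l r n q_nonneg in auto)
  also have "\<dots> = ennreal (h l r (Suc n) w)"
    using l by (simp add: h_def)
  finally show ?thesis .
qed



lemma F_step:
  assumes l: "0 < l" and r: "0 < r" and n: "n \<ge> 1"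
    and IH: "\<And>s. emeasure (PiM {1..n} (\<lambda>_. EE l)) (AA l r n s) =
               (\<integral>\<^sup>+ z. ennreal (h l r n z) * indicator {..s} z \<partial>lborel)"
  shows "emeasure (PiM {1..Suc n} (\<lambda>_. EE l)) (AA l r (Suc n) t) =
               (\<integral>\<^sup>+ z. ennreal (h l r (Suc n) z) * indicator {..t} z \<partial>lborel)"
proof -
  have "emeasure (PiM {1..Suc n} (\<lambda>_. EE l)) (AA l r (Suc n) t)
      = (\<integral>\<^sup>+ y. indicator {..r} y * emeasure (PiM {1..n} (\<lambda>_. EE l)) (AA l r n (t - y)) \<partial>EE l)"
    by (rule AA_step[OF l])
  also have "\<dots> = (\<integral>\<^sup>+ y. indicator {..r} y * (\<integral>\<^sup>+ z. ennreal (h l r n z) * indicator {..t - y} z \<partial>lborel) \<partial>EE l)"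
    by (simp only: IH)
  also have "\<dots> = (\<integral>\<^sup>+ y. ennreal (exponential_density l y) *
       (indicator {..r} y * (\<integral>\<^sup>+ z. ennreal (h l r n z) * indicator {..t - y} z \<partial>lborel)) \<partial>lborel)"
  proof -
    have [measurable]: "Measurable.pred (borel \<Otimes>\<^sub>M borel) (\<lambda>x::real\<times>real. snd x \<in> {..t - fst x})"
      unfolding atMost_iff by measurable
    show ?thesis unfolding EE_def by (rule nn_integral_density) measurable
  qed
  also have "\<dots> = (\<integral>\<^sup>+ y. (\<integral>\<^sup>+ w. ennreal (exponential_density l y) * indicator {..r} y *
       ennreal (h l r n (w - y)) * indicator {..t} w \<partial>lborel) \<partial>lborel)"
  proof (intro nn_integral_cong)
    fix y :: real
    have "(\<integral>\<^sup>+ z. ennreal (h l r n z) * indicator {..t - y} z \<partial>lborel)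
        = ennreal \<bar>1\<bar> * (\<integral>\<^sup>+ w. ennreal (h l r n (- y + 1 * w)) * indicator {..t - y} (- y + 1 * w) \<partial>lborel)"
      by (rule nn_integral_real_affine) auto
    also have "\<dots> = (\<integral>\<^sup>+ w. ennreal (h l r n (w - y)) * indicator {..t} w \<partial>lborel)"
      by (simp add: indicator_def)
    finally show "ennreal (exponential_density l y) *
       (indicator {..r} y * (\<integral>\<^sup>+ z. ennreal (h l r n z) * indicator {..t - y} z \<partial>lborel))
      = (\<integral>\<^sup>+ w. ennreal (exponential_density l y) * indicator {..r} y *
       ennreal (h l r n (w - y)) * indicator {..t} w \<partial>lborel)"
      by (simp add: nn_integral_cmult[symmetric] mult.assoc)
  qed
  also have "\<dots> = (\<integral>\<^sup>+ w. (\<integral>\<^sup>+ y. ennreal (exponential_density l y) * indicator {..r} y *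
       ennreal (h l r n (w - y)) * indicator {..t} w \<partial>lborel) \<partial>lborel)"
    by (rule lborel_pair.Fubini') measurable
  also have "\<dots> = (\<integral>\<^sup>+ w. ennreal (h l r (Suc n) w) * indicator {..t} w \<partial>lborel)"
  proof (intro nn_integral_cong)
    fix w :: real
    show "(\<integral>\<^sup>+ y. ennreal (exponential_density l y) * indicator {..r} y *
       ennreal (h l r n (w - y)) * indicator {..t} w \<partial>lborel) = ennreal (h l r (Suc n) w) * indicator {..t} w"
      by (simp add: nn_integral_multc h_point[OF l r n])
  qed
  finally show ?thesis .
qed

lemma F_one:
  assumes l: "0 < l" and r: "0 < r"
  shows "emeasure (PiM {1..Suc 0} (\<lambda>_. EE l)) (AA l r (Suc 0) t) =
               (\<integral>\<^sup>+ z. ennreal (h l r (Suc 0) z) * indicator {..t} z \<partial>lborel)"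
proof -
  have z: "emeasure (PiM {1..0} (\<lambda>_. EE l)) (AA l r 0 (t - y)) = indicator {..t} y" for y
  proof (cases "y \<le> t")
    case True
    then have "AA l r 0 (t - y) = {\<lambda>_. undefined}"
      by (auto simp: AA_def space_PiM)
    then show ?thesis using True by simp
  next
    case False
    then have "AA l r 0 (t - y) = {}"
      by (auto simp: AA_def)
    then show ?thesis using False by simp
  qed
  have "emeasure (PiM {1..Suc 0} (\<lambda>_. EE l)) (AA l r (Suc 0) t)
      = (\<integral>\<^sup>+ y. indicator {..r} y * emeasure (PiM {1..0} (\<lambda>_. EE l)) (AA l r 0 (t - y)) \<partial>EE l)"
    by (rule AA_step[OF l])
  also have "\<dots> = (\<integral>\<^sup>+ y. indicator {..r} y * indicator {..t} y \<partial>EE l)"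
    by (simp only: z)
  also have "\<dots> = (\<integral>\<^sup>+ y. ennreal (exponential_density l y) * (indicator {..r} y * indicator {..t} y) \<partial>lborel)"
    unfolding EE_def by (rule nn_integral_density) measurable
  also have "\<dots> = (\<integral>\<^sup>+ z. ennreal (h l r (Suc 0) z) * indicator {..t} z \<partial>lborel)"
  proof (rule nn_integral_cong_AE)
    show "AE y in lborel. ennreal (exponential_density l y) * (indicator {..r} y * indicator {..t} y)
       = ennreal (h l r (Suc 0) y) * indicator {..t} y"
      using AE_lborel_singleton[of r]
    proof eventually_elim
      case (elim y)
      then show ?case using l r
        by (auto simp: h_def q_def tp_def exponential_density_def indicator_def atMost_Suc algebra_simps)
    qed
  qed
  finally show ?thesis .
qed



lemma F_all:
  assumes l: "0 < l" and r: "0 < r" and n: "n \<ge> 1"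
  shows "emeasure (PiM {1..n} (\<lambda>_. EE l)) (AA l r n t) =
               (\<integral>\<^sup>+ z. ennreal (h l r n z) * indicator {..t} z \<partial>lborel)"
  using n
proof (induction n arbitrary: t rule: dec_induct)
  case base
  then show ?case using F_one[OF l r] by simp
next
  case (step n)
  then show ?case using F_step[OF l r step(1)] by blast
qed

lemma erl_shift:
  assumes l: "0 < l"
  shows "has_bochner_integral lborel (\<lambda>z. erlang_density k l (z - c) * indicator {..t} z) (erlang_CDF k l (t - c))"
proof (rule has_bochner_integral_nn_integral)
  show "(\<lambda>z. erlang_density k l (z - c) * indicator {..t} z) \<in> borel_measurable lborel" by measurable
  show "AE x in lborel. 0 \<le> erlang_density k l (x - c) * indicator {..t} x"
    using l by auto
  show "0 \<le> erlang_CDF k l (t - c)" using l by simp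
  have "(\<integral>\<^sup>+ x. ennreal (erlang_density k l x) * indicator {.. t - c} x \<partial>lborel)
      = ennreal \<bar>1\<bar> * (\<integral>\<^sup>+ z. ennreal (erlang_density k l (- c + 1 * z)) * indicator {.. t - c} (- c + 1 * z) \<partial>lborel)"
    by (rule nn_integral_real_affine) auto
  also have "\<dots> = (\<integral>\<^sup>+ z. ennreal (erlang_density k l (z - c) * indicator {..t} z) \<partial>lborel)"
    by (simp, intro nn_integral_cong) (simp add: indicator_def)
  finally show "(\<integral>\<^sup>+ z. ennreal (erlang_density k l (z - c) * indicator {..t} z) \<partial>lborel) = ennreal (erlang_CDF k l (t - c))"
    using nn_integral_erlang_density[OF l, of k "t - c"] by simp
qed

lemma h_erlang:
  assumes "n \<ge> 1"
  shows "h l r n z = (\<Sum>i\<le>n. (-1)^i * real (n choose i) * exp (- l * (real i * r)) * erlang_density (n - 1) l (z - real i * r))"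
proof -
  obtain m where n: "n = Suc m" using assms by (cases n) auto
  have "h l r n z = (\<Sum>i\<le>n. exp (- l * z) * (l ^ n / fact (n - 1)) * ((-1)^i * real (n choose i) * tp (n - 1) (z - real i * r)))"
    unfolding h_def q_def by (simp add: sum_distrib_left mult.assoc)
  also have "\<dots> = (\<Sum>i\<le>n. (-1)^i * real (n choose i) * exp (- l * (real i * r)) * erlang_density (n - 1) l (z - real i * r))"
  proof (intro sum.cong refl)
    fix i
    have e: "exp (- l * (real i * r)) * exp (- l * (z - real i * r)) = exp (- l * z)"
      by (simp add: exp_add[symmetric] algebra_simps)
    show "exp (- l * z) * (l ^ n / fact (n - 1)) * ((-1)^i * real (n choose i) * tp (n - 1) (z - real i * r))
        = (-1)^i * real (n choose i) * exp (- l * (real i * r)) * erlang_density (n - 1) l (z - real i * r)"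
      unfolding n erlang_density_def tp_def using e[symmetric]
      by (simp add: field_simps)
  qed
  finally show ?thesis .
qed

lemma F_value:
  assumes l: "0 < l" and r: "0 < r" and n: "n \<ge> 1"
  shows "enn2real (emeasure (PiM {1..n} (\<lambda>_. EE l)) (AA l r n t)) =
    (\<Sum>i\<le>n. (-1)^i * real (n choose i) * exp (- l * (real i * r)) * erlang_CDF (n - 1) l (t - real i * r))"
proof -
  have hb: "has_bochner_integral lborel (\<lambda>z. h l r n z * indicator {..t} z)
    (\<Sum>i\<le>n. (-1)^i * real (n choose i) * exp (- l * (real i * r)) * erlang_CDF (n - 1) l (t - real i * r))"
  proof -
    have "has_bochner_integral lborel (\<lambda>z. \<Sum>i\<le>n. ((-1)^i * real (n choose i) * exp (- l * (real i * r))) *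
        (erlang_density (n - 1) l (z - real i * r) * indicator {..t} z))
      (\<Sum>i\<le>n. ((-1)^i * real (n choose i) * exp (- l * (real i * r))) * erlang_CDF (n - 1) l (t - real i * r))"
      by (intro has_bochner_integral_sum has_bochner_integral_mult_right erl_shift l)
    moreover have "(\<lambda>z. \<Sum>i\<le>n. ((-1)^i * real (n choose i) * exp (- l * (real i * r))) *
        (erlang_density (n - 1) l (z - real i * r) * indicator {..t} z)) = (\<lambda>z. h l r n z * indicator {..t} z)"
      by (simp add: h_erlang[OF n] sum_distrib_right mult.assoc)
    ultimately show ?thesis by simp
  qed
  have "enn2real (\<integral>\<^sup>+ z. ennreal (h l r n z) * indicator {..t} z \<partial>lborel) = (\<integral>z. h l r n z * indicator {..t} z \<partial>lborel)"
    by (rule enn2real_nn_integral_eq_integral)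
       (use l r n in \<open>auto intro!: AE_I2 h_nonneg simp: indicator_def\<close>)
  also have "\<dots> = (\<Sum>i\<le>n. (-1)^i * real (n choose i) * exp (- l * (real i * r)) * erlang_CDF (n - 1) l (t - real i * r))"
    using hb by (rule has_bochner_integral_integral_eq)
  finally show ?thesis using F_all[OF l r n] by simp
qed



lemma exp_tail: "(\<Sum>k. x ^ (k + n) / fact (k + n)) = exp x - (\<Sum>m<n. x ^ m / fact m :: real)"
proof -
  have "(\<lambda>k. x ^ k / fact k) sums exp x"
    using exp_converges[of x] by (simp add: divide_inverse mult.commute)
  from sums_split_initial_segment[OF this, of n] show ?thesis
    by (simp add: sums_iff)
qed

lemma term_eq:
  assumes "0 \<le> s" "n \<ge> 1" and "c + s = t"
  shows "exp (- l * c) * erlang_CDF (n - 1) l s = exp (- l * t) * (\<Sum>k. (l * s) ^ (k + n) / fact (k + n))"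
proof -
  have a: "{..n - 1} = {..<n}" using assms by auto
  have x1: "- l * c + - l * s = - l * t" by (subst assms(3)[symmetric]) (simp add: algebra_simps)
  have x2: "- l * t + l * s = - l * c" by (subst assms(3)[symmetric]) (simp add: algebra_simps)
  have e1: "exp (- l * c) * exp (- l * s) = exp (- l * t)"
    by (simp only: exp_add[symmetric] x1)
  have e2: "exp (- l * t) * exp (l * s) = exp (- l * c)"
    by (simp only: exp_add[symmetric] x2)
  have "exp (- l * c) * erlang_CDF (n - 1) l s = exp (- l * c) - exp (- l * c) * exp (- l * s) * (\<Sum>m<n. (l * s) ^ m / fact m)"
    using assms unfolding erlang_CDF_def a
    by (simp add: sum_distrib_left sum_distrib_right right_diff_distrib algebra_simps)
  also have "\<dots> = exp (- l * t) * (exp (l * s) - (\<Sum>m<n. (l * s) ^ m / fact m))"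
    unfolding e1 using e2 by (simp add: right_diff_distrib)
  finally show ?thesis by (simp add: exp_tail)
qed

lemma final_sum:
  assumes n: "n \<ge> 1" and r: "0 < r" and j1: "real j * r \<le> t" and j2: "t < (real j + 1) * r"
  shows "(\<Sum>i\<le>n. (-1)^i * real (n choose i) * exp (- l * (real i * r)) * erlang_CDF (n - 1) l (t - real i * r))
    = exp (- l * t) * (\<Sum>i=0..j. (-1) ^ i * real (n choose i) *
        (\<Sum>k. (l * (t - real i * r)) ^ (k + n) / fact (k + n)))"
proof -
  define b where "b i = (-1)^i * real (n choose i) * exp (- l * (real i * r)) * erlang_CDF (n - 1) l (t - real i * r)" for i
  define d where "d i = exp (- l * t) * ((-1) ^ i * real (n choose i) *
        (\<Sum>k. (l * (t - real i * r)) ^ (k + n) / fact (k + n)))" for i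
  have bd: "b i = (if i \<le> j then d i else 0)" for i
  proof (cases "i \<le> j")
    case True
    then have "real i * r \<le> real j * r" using r by (simp add: mult_right_mono)
    then have "0 \<le> t - real i * r" using j1 by simp
    then show ?thesis using True term_eq[of "t - real i * r" n "real i * r" t l] n
      unfolding b_def d_def by simp
  next
    case False
    then have "(real j + 1) * r \<le> real i * r" using r by (intro mult_right_mono) auto
    then have "t - real i * r < 0" using j2 by simp
    then show ?thesis using False unfolding b_def by (simp add: erlang_CDF_def)
  qed
  have "(\<Sum>i\<le>n. b i) = (\<Sum>i\<le>n + j. b i)"
    by (rule sum.mono_neutral_left) (auto simp: b_def)
  also have "\<dots> = (\<Sum>i\<le>n + j. if i \<le> j then d i else 0)"
    by (simp add: bd)
  also have "\<dots> = (\<Sum>i\<in>{..n+j} \<inter> {i. i \<le> j}. d i)"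
    by (subst sum.inter_restrict) auto
  also have "{..n+j} \<inter> {i. i \<le> j} = {0..j}" by auto
  also have "(\<Sum>i=0..j. d i) = exp (- l * t) * (\<Sum>i=0..j. (-1) ^ i * real (n choose i) *
        (\<Sum>k. (l * (t - real i * r)) ^ (k + n) / fact (k + n)))"
    unfolding d_def by (simp add: sum_distrib_left)
  finally show ?thesis unfolding b_def .
qed



theorem lemma1:
  fixes M :: "'a measure" and X :: "nat \<Rightarrow> 'a \<Rightarrow> real"
    and l r t :: real and n j :: nat
  assumes "prob_space M"
    and "prob_space.indep_vars M (\<lambda>_. borel) X {1..}"
    and "\<And>k. k \<ge> 1 \<Longrightarrow> distributed M lborel (X k) (exponential_density l)"
    and "l > 0" and "r > 0"
    and "n \<ge> 1"
    and "real j * r \<le> t" and "t < (real j + 1) * r"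
  shows "measure M {\<omega> \<in> space M. (\<Sum>k=1..n. X k \<omega>) \<le> t \<and> (\<forall>k\<in>{1..n}. X k \<omega> \<le> r)}
    = exp (- l * t) * (\<Sum>i=0..j. (-1) ^ i * real (n choose i) *
        (\<Sum>k. (l * (t - real i * r)) ^ (k + n) / fact (k + n)))"
proof -
  interpret prob_space M by (rule assms(1))
  have l: "0 < l" and r: "0 < r" and n: "n \<ge> 1" using assms by auto
  have rv: "X k \<in> borel_measurable M" if "k \<in> {1..n}" for k
    using distributed_measurable[OF assms(3)[of k]] that by simp
  have ind: "indep_vars (\<lambda>_. borel) X {1..n}"
    by (rule indep_vars_subset[OF assms(2)]) auto
  define V where "V = (\<lambda>\<omega>. \<lambda>k\<in>{1..n}. X k \<omega>)"
  have Vm: "V \<in> measurable M (PiM {1..n} (\<lambda>_. borel))"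
    unfolding V_def by (rule measurable_restrict) (rule rv)
  have dd: "distr M borel (X k) = EE l" if "k \<in> {1..n}" for k
  proof -
    have "distr M borel (X k) = distr M lborel (X k)"
      by (rule distr_cong) auto
    also have "\<dots> = density lborel (exponential_density l)"
      using distributed_distr_eq_density[OF assms(3)[of k]] that by simp
    finally show ?thesis by (simp add: EE_def)
  qed
  have "distr M (PiM {1..n} (\<lambda>_. borel)) V = PiM {1..n} (\<lambda>i. distr M borel (X i))"
    using ind indep_vars_iff_distr_eq_PiM'[where I="{1..n}" and M'="\<lambda>_. borel" and X=X] rv n
    unfolding V_def by auto
  also have "\<dots> = PiM {1..n} (\<lambda>_. EE l)"
    by (rule PiM_cong) (auto simp: dd)
  finally have D: "distr M (PiM {1..n} (\<lambda>_. borel)) V = PiM {1..n} (\<lambda>_. EE l)" .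
  have sp: "space (PiM {1..n} (\<lambda>_. EE l)) = space (PiM {1..n} (\<lambda>_. borel :: real measure))"
    by (simp add: space_PiM EE_def)
  have AAs: "AA l r n t \<in> sets (PiM {1..n} (\<lambda>_. borel))"
  proof -
    have "sets (PiM {1..n} (\<lambda>_. EE l)) = sets (PiM {1..n} (\<lambda>_. borel :: real measure))"
      by (rule sets_PiM_cong) auto
    then show ?thesis using AA_sets[of l r n t] by simp
  qed
  have "emeasure (PiM {1..n} (\<lambda>_. EE l)) (AA l r n t) = emeasure M (V -` AA l r n t \<inter> space M)"
    unfolding D[symmetric] by (rule emeasure_distr[OF Vm AAs])
  also have "V -` AA l r n t \<inter> space M =
      {\<omega> \<in> space M. (\<Sum>k=1..n. X k \<omega>) \<le> t \<and> (\<forall>k\<in>{1..n}. X k \<omega> \<le> r)}"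
  proof -
    have "V \<omega> \<in> space (PiM {1..n} (\<lambda>_. EE l))" if "\<omega> \<in> space M" for \<omega>
      using measurable_space[OF Vm that] sp by simp
    moreover have "(\<Sum>k=1..n. V \<omega> k) = (\<Sum>k=1..n. X k \<omega>)" for \<omega>
      unfolding V_def by (rule sum.cong) auto
    ultimately show ?thesis unfolding AA_def by (auto simp: V_def)
  qed
  finally have "measure M {\<omega> \<in> space M. (\<Sum>k=1..n. X k \<omega>) \<le> t \<and> (\<forall>k\<in>{1..n}. X k \<omega> \<le> r)}
      = enn2real (emeasure (PiM {1..n} (\<lambda>_. EE l)) (AA l r n t))"
    by (simp add: measure_def)
  also have "\<dots> = (\<Sum>i\<le>n. (-1)^i * real (n choose i) * exp (- l * (real i * r)) * erlang_CDF (n - 1) l (t - real i * r))"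
    by (rule F_value[OF l r n])
  also have "\<dots> = exp (- l * t) * (\<Sum>i=0..j. (-1) ^ i * real (n choose i) *
        (\<Sum>k. (l * (t - real i * r)) ^ (k + n) / fact (k + n)))"
    by (rule final_sum[OF n r assms(7,8)])
  finally show ?thesis .
qed

end
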